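(* Let $L>0$, $\rho\in C([0,L];[0,\infty))$ with $\rho(0)=0$, $\rho>0$ on $(0,L]$ and $V(0,0):=\int_0^L\rho(\zeta)/\zeta\,d\zeta<\infty$; let $V(r,z)=\int_0^L\rho(\zeta)((\zeta-z)^2+r^2)^{-1/2}d\zeta$. Let $\alpha>0$. (a) Suppose $\rho$ is monotonically increasing on some interval $[0,b]$, $b>0$, and let $\delta\in(0,1)$. Then $\lim_{z\to0+}\rho(z)\log z=0$ and $$\limsup_{z\to0+}V\Big(\exp\Big(-\tfrac{\alpha}{\rho((1+\delta)z)}\Big),z\Big)\le V(0,0)+2\alpha\le\liminf_{z\to0+}V\Big(\exp\Big(-\tfrac{\alpha}{\rho((1-\delta)z)}\Big),z\Big).$$ (b) Suppose $\rho$ is Dini continuous on some interval $[0,b]$, $b\in(0,L]$. Then $\lim_{z\to0+}\rho(z)\log z=0$ and $$\lim_{z\to0+}V(e^{-\alpha/\rho(z)},z)=V(0,0)+2\alpha.$$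
   Context: For continuous $f:[a,b]\to\mathbb{R}$, the modulus of continuity is $\omega_f(t)=\sup\{|f(x)-f(y)|:x,y\in[a,b],|x-y|\le t\}$, and $f$ is Dini continuous if $\int_0^1\omega_f(t)/t\,dt<\infty$. *)

theory Defs
  imports "HOL-Analysis.Analysis" "HOL-Library.Liminf_Limsup"
begin

text \<open>The potential V(r,z) = int_0^L rho(zeta) ((zeta - z)^2 + r^2)^(-1/2) d zeta.
  Note V 0 0 = int_0^L rho(zeta)/zeta d zeta (since sqrt(zeta^2) = zeta on [0,L]).\<close>
definition pot :: "(real \<Rightarrow> real) \<Rightarrow> real \<Rightarrow> real \<Rightarrow> real \<Rightarrow> real" where
  "pot \<rho> L r z = integral {0..L} (\<lambda>\<zeta>. \<rho> \<zeta> / sqrt ((\<zeta> - z)\<^sup>2 + r\<^sup>2))"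

definition modulus_cont :: "(real \<Rightarrow> real) \<Rightarrow> real \<Rightarrow> real \<Rightarrow> real \<Rightarrow> real" where
  "modulus_cont f a b t =
     Sup {\<bar>f x - f y\<bar> | x y. x \<in> {a..b} \<and> y \<in> {a..b} \<and> \<bar>x - y\<bar> \<le> t}"

definition dini_continuous_on :: "(real \<Rightarrow> real) \<Rightarrow> real \<Rightarrow> real \<Rightarrow> bool" where
  "dini_continuous_on f a b \<longleftrightarrow>
     continuous_on {a..b} f \<and>
     (\<lambda>t. modulus_cont f a b t / t) integrable_on {0..1}"

end

theory Submission
  imports Defs
begin


lemma sqrt_gt_abs: "r > 0 \<Longrightarrow> sqrt (u\<^sup>2 + r\<^sup>2) > \<bar>u\<bar>"
  by (metis abs_of_pos add_less_cancel_left add_pos_pos real_sqrt_abs real_sqrt_less_mono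
      power2_less_0 zero_less_power2 less_add_same_cancel1 not_less zero_less_abs_iff)

lemma alg1: "(s::real) > 0 \<Longrightarrow> d + s > 0 \<Longrightarrow> inverse (d + s) * (1 + inverse s / 2 * (2 * d)) = 1 / s"
  by (simp add: field_simps)

lemma K_integral:
  fixes r z a b :: real
  assumes r: "r > 0" and a: "a \<ge> 0" and b: "b \<ge> 0"
  shows "((\<lambda>\<zeta>. 1 / sqrt ((\<zeta> - z)\<^sup>2 + r\<^sup>2)) has_integral
           (ln (b + sqrt (b\<^sup>2 + r\<^sup>2)) + ln (a + sqrt (a\<^sup>2 + r\<^sup>2)) - 2 * ln r)) {z - a..z + b}"
proof -
  define F where "F \<zeta> = ln ((\<zeta> - z) + sqrt ((\<zeta> - z)\<^sup>2 + r\<^sup>2))" for \<zeta>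
  have pos: "(u::real) + sqrt (u\<^sup>2 + r\<^sup>2) > 0" for u
    using sqrt_gt_abs[OF r, of u] by linarith
  have sp: "sqrt (u\<^sup>2 + r\<^sup>2) > 0" for u :: real
    using r by (simp add: add_nonneg_pos)
  have der: "(F has_real_derivative 1 / sqrt ((x - z)\<^sup>2 + r\<^sup>2)) (at x)" for x
  proof -
    have q: "0 < (x - z)\<^sup>2 + r\<^sup>2" using r by (simp add: add_nonneg_pos)
    have d1: "((\<lambda>x. (x - z)\<^sup>2 + r\<^sup>2) has_real_derivative (2 * (x - z))) (at x)"
      by (auto intro!: derivative_eq_intros)
    have d2: "((\<lambda>x. sqrt ((x - z)\<^sup>2 + r\<^sup>2)) has_real_derivative (inverse (sqrt ((x - z)\<^sup>2 + r\<^sup>2)) / 2 * (2 * (x - z)))) (at x)"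
      by (rule DERIV_chain2[OF DERIV_real_sqrt[OF q] d1])
    have d3: "((\<lambda>x. (x - z) + sqrt ((x - z)\<^sup>2 + r\<^sup>2)) has_real_derivative (1 + inverse (sqrt ((x - z)\<^sup>2 + r\<^sup>2)) / 2 * (2 * (x - z)))) (at x)"
      by (rule derivative_eq_intros d2 refl | simp)+
    have "(F has_real_derivative (inverse ((x - z) + sqrt ((x - z)\<^sup>2 + r\<^sup>2)) * (1 + inverse (sqrt ((x - z)\<^sup>2 + r\<^sup>2)) / 2 * (2 * (x - z))))) (at x)"
      unfolding F_def by (rule DERIV_chain2[OF DERIV_ln[OF pos] d3])
    moreover have "inverse ((x - z) + sqrt ((x - z)\<^sup>2 + r\<^sup>2)) * (1 + inverse (sqrt ((x - z)\<^sup>2 + r\<^sup>2)) / 2 * (2 * (x - z)))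
        = 1 / sqrt ((x - z)\<^sup>2 + r\<^sup>2)"
      using alg1[OF sp[of "x - z"] pos[of "x - z"]] .
    ultimately show ?thesis by simp
  qed
  have "((\<lambda>\<zeta>. 1 / sqrt ((\<zeta> - z)\<^sup>2 + r\<^sup>2)) has_integral (F (z + b) - F (z - a))) {z - a..z + b}"
    by (rule fundamental_theorem_of_calculus) 
       (use a b der in \<open>auto intro: has_field_derivative_at_within simp: has_real_derivative_iff_has_vector_derivative[symmetric]\<close>)
  moreover have "F (z - a) = 2 * ln r - ln (a + sqrt (a\<^sup>2 + r\<^sup>2))"
  proof -
    define S where "S = sqrt (a\<^sup>2 + r\<^sup>2)"
    have e: "(-a + S) * (a + S) = r\<^sup>2"
      unfolding S_def by (simp add: algebra_simps power2_eq_square[symmetric] add_nonneg_nonneg)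
    have pa: "a + S > 0" unfolding S_def by (rule pos)
    have e2: "-a + S = r\<^sup>2 / (a + S)"
      using e pa by (simp add: eq_divide_eq)
    have "F (z - a) = ln (-a + S)" unfolding F_def S_def by simp
    also have "\<dots> = ln (r\<^sup>2 / (a + S))" using e2 by simp
    also have "\<dots> = 2 * ln r - ln (a + S)"
      using pa r by (simp add: ln_div ln_realpow)
    finally show ?thesis unfolding S_def .
  qed
  moreover have "F (z + b) = ln (b + sqrt (b\<^sup>2 + r\<^sup>2))" unfolding F_def by simp
  ultimately show ?thesis by (simp add: algebra_simps)
qed



lemma sqrt_sq_le: "sqrt (u\<^sup>2 + v\<^sup>2) \<le> \<bar>u\<bar> + \<bar>v\<bar>"
proof -
  have "u\<^sup>2 + v\<^sup>2 \<le> (\<bar>u\<bar> + \<bar>v\<bar>)\<^sup>2" by (simp add: power2_eq_square algebra_simps)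
  then have "sqrt (u\<^sup>2 + v\<^sup>2) \<le> sqrt ((\<bar>u\<bar> + \<bar>v\<bar>)\<^sup>2)" by (rule real_sqrt_le_mono)
  then show ?thesis by simp
qed

lemma lnlim:
  fixes g r :: "real \<Rightarrow> real" and \<kappa> :: real
  assumes k: "\<kappa> > 0" and g: "(g \<longlongrightarrow> 0) (at_right 0)"
    and gl: "((\<lambda>z. g z * ln z) \<longlongrightarrow> 0) (at_right 0)"
    and r: "(r \<longlongrightarrow> 0) (at_right 0)"
  shows "((\<lambda>z. g z * ln (\<kappa> * z + sqrt ((\<kappa> * z)\<^sup>2 + (r z)\<^sup>2))) \<longlongrightarrow> 0) (at_right 0)"
proof (rule Lim_null_comparison)
  have e1: "eventually (\<lambda>z. \<kappa> * z < 1/4) (at_right 0)"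
  proof -
    have "((\<lambda>z. \<kappa> * z) \<longlongrightarrow> \<kappa> * 0) (at_right 0)" by (intro tendsto_intros)
    then show ?thesis by (rule order_tendstoD) simp
  qed
  have e2: "eventually (\<lambda>z. \<bar>r z\<bar> < 1/4) (at_right 0)"
  proof -
    have "((\<lambda>z. \<bar>r z\<bar>) \<longlongrightarrow> \<bar>0\<bar>) (at_right 0)" by (intro tendsto_intros r)
    then show ?thesis by (rule order_tendstoD) simp
  qed
  show "eventually (\<lambda>z. norm (g z * ln (\<kappa> * z + sqrt ((\<kappa> * z)\<^sup>2 + (r z)\<^sup>2)))
      \<le> \<bar>g z\<bar> * \<bar>ln \<kappa>\<bar> + \<bar>g z * ln z\<bar>) (at_right 0)"
    using e1 e2 eventually_at_right_less[of "0::real"]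
  proof eventually_elim
    case (elim z)
    define x where "x = \<kappa> * z + sqrt ((\<kappa> * z)\<^sup>2 + (r z)\<^sup>2)"
    have kz: "\<kappa> * z > 0" using k elim by simp
    have "sqrt ((\<kappa> * z)\<^sup>2 + (r z)\<^sup>2) \<ge> 0" by simp
    then have x1: "x \<ge> \<kappa> * z" unfolding x_def by simp
    have "sqrt ((\<kappa> * z)\<^sup>2 + (r z)\<^sup>2) \<le> \<bar>\<kappa> * z\<bar> + \<bar>r z\<bar>" by (rule sqrt_sq_le)
    then have x2: "x \<le> 1" unfolding x_def using elim kz by simp
    have lx: "ln x \<le> 0" using x1 x2 kz by simp
    have "ln x \<ge> ln (\<kappa> * z)" using x1 kz by simp
    also have "ln (\<kappa> * z) = ln \<kappa> + ln z" using k elim by (simp add: ln_mult)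
    finally have "\<bar>ln x\<bar> \<le> \<bar>ln \<kappa>\<bar> + \<bar>ln z\<bar>" using lx by linarith
    then have "\<bar>g z\<bar> * \<bar>ln x\<bar> \<le> \<bar>g z\<bar> * (\<bar>ln \<kappa>\<bar> + \<bar>ln z\<bar>)"
      by (rule mult_left_mono) simp
    then show ?case unfolding x_def[symmetric] by (simp add: abs_mult algebra_simps)
  qed
  have "((\<lambda>z. \<bar>g z\<bar> * \<bar>ln \<kappa>\<bar> + \<bar>g z * ln z\<bar>) \<longlongrightarrow> \<bar>0\<bar> * \<bar>ln \<kappa>\<bar> + \<bar>0\<bar>) (at_right 0)"
    by (intro tendsto_intros g gl)
  then show "((\<lambda>z. \<bar>g z\<bar> * \<bar>ln \<kappa>\<bar> + \<bar>g z * ln z\<bar>) \<longlongrightarrow> 0) (at_right 0)" by simp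
qed

lemma integral_inv:
  fixes a b :: real
  assumes "0 < a" "a \<le> b"
  shows "((\<lambda>t. 1 / t) has_integral (ln b - ln a)) {a..b}"
proof -
  have "((\<lambda>t. 1 / t) has_integral (ln b - ln a)) {a..b}"
  proof (rule fundamental_theorem_of_calculus[of a b ln "\<lambda>t. 1 / t"])
    show "a \<le> b" by fact
    fix x assume "x \<in> {a..b}"
    then have "x > 0" using assms by auto
    then have "(ln has_real_derivative 1 / x) (at x)" by (rule DERIV_ln_divide)
    then show "(ln has_vector_derivative 1 / x) (at x within {a..b})"
      unfolding has_real_derivative_iff_has_vector_derivative[symmetric] by (rule has_field_derivative_at_within)
  qed
  then show ?thesis .
qed

lemma rho_log:
  fixes f g :: "real \<Rightarrow> real"
  assumes b: "0 < b" and fg: "\<forall>t\<in>{0<..b}. 0 \<le> f t \<and> f t \<le> g t"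
    and mono: "\<forall>s\<in>{0<..b}. \<forall>t\<in>{0<..b}. s \<le> t \<longrightarrow> g s \<le> g t"
    and int: "(\<lambda>t. g t / t) integrable_on {0..b}"
  shows "((\<lambda>z. f z * ln z) \<longlongrightarrow> 0) (at_right 0)"
proof -
  define I where "I x = integral {0..x} (\<lambda>t. g t / t)" for x
  have "continuous_on {0..b} I" unfolding I_def by (rule indefinite_integral_continuous_1[OF int])
  then have "(I \<longlongrightarrow> I 0) (at 0 within {0..b})" using b by (simp add: continuous_on_def)
  then have I0: "(I \<longlongrightarrow> 0) (at_right 0)" using b by (simp add: at_within_Icc_at_right I_def)
  have sq: "filterlim sqrt (at_right 0) (at_right (0::real))"
  proof (rule tendsto_imp_filterlim_at_right)
    show "(sqrt \<longlongrightarrow> 0) (at_right 0)"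
      using tendsto_real_sqrt[OF tendsto_ident_at[of 0 "{0<..}"]] by simp
    show "eventually (\<lambda>x. 0 < sqrt x) (at_right (0::real))"
      using eventually_at_right_less[of "0::real"] by eventually_elim simp
  qed
  have IS: "((\<lambda>z. 2 * I (sqrt z)) \<longlongrightarrow> 2 * 0) (at_right 0)"
    by (intro tendsto_intros filterlim_compose[OF I0 sq])
  show ?thesis
  proof (rule Lim_null_comparison[OF _ IS[simplified]])
    have e1: "eventually (\<lambda>z. z < min 1 (b\<^sup>2)) (at_right (0::real))"
      unfolding eventually_at_right_field
      by (rule exI[of _ "min 1 (b\<^sup>2)"]) (use b in simp)
    show "eventually (\<lambda>z. norm (f z * ln z) \<le> 2 * I (sqrt z)) (at_right 0)"
      using e1 eventually_at_right_less[of "0::real"]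
    proof eventually_elim
      case (elim z)
      define s where "s = sqrt z"
      have z1: "z < 1" and z0: "0 < z" using elim by auto
      have "sqrt z < sqrt (b\<^sup>2)" using elim by (intro real_sqrt_less_mono) auto
      then have sb: "s \<le> b" using b unfolding s_def by simp
      have "z\<^sup>2 \<le> z" using z0 z1 by (simp add: power2_eq_square mult_left_le_one_le)
      then have "sqrt (z\<^sup>2) \<le> sqrt z" by (rule real_sqrt_le_mono)
      then have zs: "z \<le> s" unfolding s_def using z0 by simp
      have s0: "s > 0" unfolding s_def using z0 by simp
      have lns: "ln s = ln z / 2" unfolding s_def using z0 by (simp add: ln_sqrt)
      have lz: "ln z < 0" using z0 z1 by simp
      have fz: "0 \<le> f z" "f z \<le> g z" using fg z0 zs sb by auto
      have "norm (f z * ln z) = f z * (- ln z)" using lz fz by (simp add: abs_mult)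
      also have "\<dots> = 2 * (f z * (ln s - ln z))" using lns by (simp add: algebra_simps)
      also have "\<dots> \<le> 2 * (g z * (ln s - ln z))"
        using fz lz lns by (intro mult_left_mono mult_right_mono) auto
      also have "g z * (ln s - ln z) = integral {z..s} (\<lambda>t. g z * (1 / t))"
        by (rule integral_unique[symmetric, OF has_integral_mult_right[OF integral_inv[OF z0 zs]]])
      also have "\<dots> \<le> integral {z..s} (\<lambda>t. g t / t)"
      proof (rule integral_le)
        show "(\<lambda>t. g z * (1 / t)) integrable_on {z..s}"
          by (rule has_integral_integrable[OF has_integral_mult_right[OF integral_inv[OF z0 zs]]])
        show "(\<lambda>t. g t / t) integrable_on {z..s}"
          by (rule integrable_on_subinterval[OF int]) (use z0 sb in auto)
        fix t assume t: "t \<in> {z..s}"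
        then have "g z \<le> g t" using mono z0 sb by auto
        then show "g z * (1 / t) \<le> g t / t" using t z0 by (simp add: divide_right_mono)
      qed
      also have "\<dots> \<le> I s"
      proof -
        have i1: "(\<lambda>t. g t / t) integrable_on {0..s}"
          by (rule integrable_on_subinterval[OF int]) (use sb in auto)
        have "I s = integral {0..z} (\<lambda>t. g t / t) + integral {z..s} (\<lambda>t. g t / t)"
          unfolding I_def using Henstock_Kurzweil_Integration.integral_combine[OF _ zs i1] z0 by simp
        moreover have "integral {0..z} (\<lambda>t. g t / t) \<ge> 0"
        proof (rule integral_nonneg)
          show "(\<lambda>t. g t / t) integrable_on {0..z}"
            by (rule integrable_on_subinterval[OF int]) (use sb zs in auto)
          fix t assume "t \<in> {0..z}"
          then have t: "0 \<le> t" "t \<le> b" using zs sb by auto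
          show "0 \<le> g t / t"
          proof (cases "t = 0")
            case False
            then have "t \<in> {0<..b}" using t by auto
            then have "0 \<le> f t \<and> f t \<le> g t" using fg by blast
            then have "0 \<le> g t" by linarith
            then show ?thesis using t by simp
          qed simp
        qed
        ultimately show ?thesis by simp
      qed
      finally show ?case unfolding s_def by simp
    qed
  qed
qed



lemma lemB:
  fixes \<rho> r :: "real \<Rightarrow> real" and L c :: real
  assumes L: "L > 0" and cont: "continuous_on {0..L} \<rho>" and nonneg: "\<forall>x\<in>{0..L}. \<rho> x \<ge> 0"
    and V: "(\<lambda>\<zeta>. \<rho> \<zeta> / \<zeta>) integrable_on {0..L}" and c: "c > 1" and r: "(r \<longlongrightarrow> 0) (at_right 0)"
  shows "((\<lambda>z. integral {c*z..L} (\<lambda>\<zeta>. \<rho> \<zeta> / sqrt ((\<zeta> - z)\<^sup>2 + (r z)\<^sup>2)))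
           \<longlongrightarrow> integral {0..L} (\<lambda>\<zeta>. \<rho> \<zeta> / \<zeta>)) (at_right 0)"
proof -
  define h where "h z \<zeta> = (if \<zeta> \<in> {c*z..} then \<rho> \<zeta> / sqrt ((\<zeta> - z)\<^sup>2 + (r z)\<^sup>2) else 0)" for z \<zeta>
  have seteq: "{c*z..} \<inter> {0..L} = {c*z..L}" if "z > 0" for z
    using that c by auto
  have eq: "integral {0..L} (h z) = integral {c*z..L} (\<lambda>\<zeta>. \<rho> \<zeta> / sqrt ((\<zeta> - z)\<^sup>2 + (r z)\<^sup>2))"
    if "z > 0" for z
    unfolding h_def integral_restrict_Int seteq[OF that] ..
  have intg: "h z integrable_on {0..L}" if z: "z > 0" for z
  proof -
    have "continuous_on {c*z..L} (\<lambda>\<zeta>. \<rho> \<zeta> / sqrt ((\<zeta> - z)\<^sup>2 + (r z)\<^sup>2))"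
    proof (rule continuous_on_divide)
      show "continuous_on {c*z..L} \<rho>" by (rule continuous_on_subset[OF cont]) (use z c in auto)
      show "continuous_on {c*z..L} (\<lambda>\<zeta>. sqrt ((\<zeta> - z)\<^sup>2 + (r z)\<^sup>2))"
        by (intro continuous_intros)
      show "\<forall>\<zeta>\<in>{c*z..L}. sqrt ((\<zeta> - z)\<^sup>2 + (r z)\<^sup>2) \<noteq> 0"
      proof
        fix \<zeta> assume "\<zeta> \<in> {c*z..L}"
        then have "c * z \<le> \<zeta>" by simp
        moreover have "(c - 1) * z > 0" using z c by simp
        moreover have "(c - 1) * z = c * z - z" by (simp add: algebra_simps)
        ultimately have "\<zeta> - z > 0" by linarith
        then show "sqrt ((\<zeta> - z)\<^sup>2 + (r z)\<^sup>2) \<noteq> 0" by (simp add: add_nonneg_eq_0_iff)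
      qed
    qed
    then have "(\<lambda>\<zeta>. \<rho> \<zeta> / sqrt ((\<zeta> - z)\<^sup>2 + (r z)\<^sup>2)) integrable_on ({c*z..} \<inter> {0..L})"
      unfolding seteq[OF z] by (rule integrable_continuous_real)
    then show ?thesis unfolding h_def integrable_restrict_Int .
  qed
  define D where "D \<zeta> = c / (c - 1) * (\<rho> \<zeta> / \<zeta>)" for \<zeta>
  have Dint: "D integrable_on {0..L}" unfolding D_def by (rule integrable_on_mult_right[OF V])
  have bound: "norm (h z \<zeta>) \<le> D \<zeta>" if z: "z > 0" and zeta: "\<zeta> \<in> {0..L}" for z \<zeta>
  proof (cases "\<zeta> \<in> {c*z..}")
    case True
    then have cz: "c * z \<le> \<zeta>" by simp
    have "c * z > 0" using z c by simp
    then have zp: "\<zeta> > 0" using cz by linarith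
    have "\<zeta> - z \<ge> \<zeta> * (c - 1) / c"
      using cz c by (simp add: field_simps)
    moreover have "\<zeta> * (c - 1) / c > 0" using zp c by simp
    moreover have "sqrt ((\<zeta> - z)\<^sup>2 + (r z)\<^sup>2) \<ge> \<zeta> - z"
    proof -
      have "sqrt ((\<zeta> - z)\<^sup>2) \<le> sqrt ((\<zeta> - z)\<^sup>2 + (r z)\<^sup>2)" by (rule real_sqrt_le_mono) simp
      then show ?thesis by simp
    qed
    ultimately have s: "sqrt ((\<zeta> - z)\<^sup>2 + (r z)\<^sup>2) \<ge> \<zeta> * (c - 1) / c" "\<zeta> * (c - 1) / c > 0" by linarith+
    have rp: "\<rho> \<zeta> \<ge> 0" using nonneg zeta by auto
    have "norm (h z \<zeta>) = \<rho> \<zeta> / sqrt ((\<zeta> - z)\<^sup>2 + (r z)\<^sup>2)" using True rp unfolding h_def by simp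
    also have "\<dots> \<le> \<rho> \<zeta> / (\<zeta> * (c - 1) / c)"
    proof (rule divide_left_mono[OF s(1) rp])
      have "sqrt ((\<zeta> - z)\<^sup>2 + (r z)\<^sup>2) > 0" using s by linarith
      from mult_pos_pos[OF this s(2)]
      show "0 < sqrt ((\<zeta> - z)\<^sup>2 + (r z)\<^sup>2) * (\<zeta> * (c - 1) / c)" .
    qed
    also have "\<dots> = D \<zeta>" unfolding D_def using c zp by (simp add: field_simps)
    finally show ?thesis .
  next
    case False
    have "D \<zeta> \<ge> 0" unfolding D_def using nonneg zeta c by auto
    then show ?thesis using False unfolding h_def by simp
  qed
  have conv: "(\<lambda>k. h (S k) \<zeta>) \<longlonglongrightarrow> \<rho> \<zeta> / \<zeta>"
    if S0: "\<And>n. 0 < S n" and S: "S \<longlonglongrightarrow> 0" and zeta: "\<zeta> \<in> {0..L}" for S \<zeta>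
  proof (cases "\<zeta> = 0")
    case True
    have "h (S k) \<zeta> = 0" for k
    proof -
      have "c * S k > 0" using S0[of k] c by simp
      then show ?thesis using True unfolding h_def by simp
    qed
    then show ?thesis using True by simp
  next
    case False
    then have zp: "\<zeta> > 0" using zeta by simp
    have "(\<lambda>k. c * S k) \<longlonglongrightarrow> c * 0" by (intro tendsto_intros S)
    then have ev: "eventually (\<lambda>k. c * S k < \<zeta>) sequentially"
      using zp by (intro order_tendstoD) auto
    have fS: "filterlim S (at_right 0) sequentially"
      by (rule tendsto_imp_filterlim_at_right[OF S]) (use S0 in simp)
    have rS: "(\<lambda>k. r (S k)) \<longlonglongrightarrow> 0" by (rule filterlim_compose[OF r fS])
    have "(\<lambda>k. \<rho> \<zeta> / sqrt ((\<zeta> - S k)\<^sup>2 + (r (S k))\<^sup>2)) \<longlonglongrightarrow> \<rho> \<zeta> / sqrt ((\<zeta> - 0)\<^sup>2 + 0\<^sup>2)"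
      by (intro tendsto_intros S rS) (use zp in simp)
    then have "(\<lambda>k. \<rho> \<zeta> / sqrt ((\<zeta> - S k)\<^sup>2 + (r (S k))\<^sup>2)) \<longlonglongrightarrow> \<rho> \<zeta> / \<zeta>"
      using zp by simp
    then show ?thesis
      by (rule Lim_transform_eventually) (use ev in \<open>eventually_elim, simp add: h_def\<close>)
  qed
  have "((\<lambda>z. integral {0..L} (h z)) \<longlongrightarrow> integral {0..L} (\<lambda>\<zeta>. \<rho> \<zeta> / \<zeta>)) (at_right 0)"
  proof (rule tendsto_at_right_sequentially[of 0 1])
    fix S :: "nat \<Rightarrow> real"
    assume S0: "\<And>n. 0 < S n" and S: "S \<longlonglongrightarrow> 0"
    show "(\<lambda>n. integral {0..L} (h (S n))) \<longlonglongrightarrow> integral {0..L} (\<lambda>\<zeta>. \<rho> \<zeta> / \<zeta>)"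
      by (rule dominated_convergence(2)[OF intg[OF S0] Dint bound[OF S0] conv[OF S0 S]])
  qed simp
  then show ?thesis
    by (rule Lim_transform_eventually) (use eventually_at_right_less[of "0::real"] in \<open>eventually_elim, simp add: eq\<close>)
qed



lemma dini_err:
  fixes \<rho> w :: "real \<Rightarrow> real" and b z r :: real
  assumes cont: "continuous_on {0..b} \<rho>"
    and wle: "\<forall>x\<in>{0..b}. \<forall>y\<in>{0..b}. \<bar>\<rho> x - \<rho> y\<bar> \<le> w \<bar>x - y\<bar>"
    and wnn: "\<forall>t\<ge>0. w t \<ge> 0"
    and wint: "(\<lambda>t. w t / t) integrable_on {0..z}"
    and z: "0 < z" "2 * z \<le> b" and r: "r > 0"
  shows "\<bar>integral {0..2*z} (\<lambda>\<zeta>. \<rho> \<zeta> / sqrt ((\<zeta> - z)\<^sup>2 + r\<^sup>2))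
          - \<rho> z * integral {0..2*z} (\<lambda>\<zeta>. 1 / sqrt ((\<zeta> - z)\<^sup>2 + r\<^sup>2))\<bar>
         \<le> 2 * integral {0..z} (\<lambda>t. w t / t)"
proof -
  define \<Omega> where "\<Omega> t = w t / t" for t
  define I where "I = integral {0..z} \<Omega>"
  have hI: "(\<Omega> has_integral I) {0..z}" unfolding I_def \<Omega>_def using wint by (simp add: integrable_integral)
  have p1: "((\<lambda>\<zeta>. \<Omega> \<bar>\<zeta> - z\<bar>) has_integral I) {z..2*z}"
  proof -
    have "((\<Omega> \<circ> (+) (-z)) has_integral I) {z..2*z}"
      using has_integral_shift_Icc_real[of \<Omega> "-z" I z "2*z"] hI by simp
    then show ?thesis by (rule has_integral_cong[THEN iffD1, rotated]) auto
  qed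
  have p2: "((\<lambda>\<zeta>. \<Omega> \<bar>\<zeta> - z\<bar>) has_integral I) {0..z}"
  proof -
    have "((\<Omega> \<circ> (+) z) has_integral I) {-z..0}"
      using has_integral_shift_Icc_real[of \<Omega> z I "-z" 0] hI by simp
    then have "((\<lambda>x. (\<Omega> \<circ> (+) z) (-x)) has_integral I) {-0..-(-z)}"
      by (subst has_integral_reflect_real)
    then have "((\<lambda>x. (\<Omega> \<circ> (+) z) (-x)) has_integral I) {0..z}" by simp
    then show ?thesis by (rule has_integral_cong[THEN iffD1, rotated]) auto
  qed
  have pI: "((\<lambda>\<zeta>. \<Omega> \<bar>\<zeta> - z\<bar>) has_integral (I + I)) {0..2*z}"
    by (rule has_integral_combine[OF _ _ p2 p1]) (use z in auto)
  have sp: "sqrt ((\<zeta> - z)\<^sup>2 + r\<^sup>2) > 0" for \<zeta>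
    using r by (simp add: add_nonneg_pos)
  have i1: "(\<lambda>\<zeta>. \<rho> \<zeta> / sqrt ((\<zeta> - z)\<^sup>2 + r\<^sup>2)) integrable_on {0..2*z}"
  proof (rule integrable_continuous_real, rule continuous_on_divide)
    show "continuous_on {0..2 * z} \<rho>" by (rule continuous_on_subset[OF cont]) (use z in auto)
    show "continuous_on {0..2 * z} (\<lambda>\<zeta>. sqrt ((\<zeta> - z)\<^sup>2 + r\<^sup>2))" by (intro continuous_intros)
    show "\<forall>\<zeta>\<in>{0..2 * z}. sqrt ((\<zeta> - z)\<^sup>2 + r\<^sup>2) \<noteq> 0" using sp by (metis less_irrefl)
  qed
  have i2: "(\<lambda>\<zeta>. 1 / sqrt ((\<zeta> - z)\<^sup>2 + r\<^sup>2)) integrable_on {0..2*z}"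
  proof -
    have hk: "((\<lambda>\<zeta>. 1 / sqrt ((\<zeta> - z)\<^sup>2 + r\<^sup>2)) has_integral
           (ln (z + sqrt (z\<^sup>2 + r\<^sup>2)) + ln (z + sqrt (z\<^sup>2 + r\<^sup>2)) - 2 * ln r)) {z - z..z + z}"
      by (rule K_integral) (use r z in auto)
    have e: "{z - z..z + z} = {0..2*z}" by simp
    from hk[unfolded e] show ?thesis by (rule has_integral_integrable)
  qed
  have "integral {0..2*z} (\<lambda>\<zeta>. \<rho> \<zeta> / sqrt ((\<zeta> - z)\<^sup>2 + r\<^sup>2))
          - \<rho> z * integral {0..2*z} (\<lambda>\<zeta>. 1 / sqrt ((\<zeta> - z)\<^sup>2 + r\<^sup>2))
        = integral {0..2*z} (\<lambda>\<zeta>. \<rho> \<zeta> / sqrt ((\<zeta> - z)\<^sup>2 + r\<^sup>2) - \<rho> z * (1 / sqrt ((\<zeta> - z)\<^sup>2 + r\<^sup>2)))"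
    by (simp only: integral_diff[OF i1 integrable_on_mult_right[OF i2]] integral_mult_right)
  also have "\<bar>\<dots>\<bar> \<le> integral {0..2*z} (\<lambda>\<zeta>. \<Omega> \<bar>\<zeta> - z\<bar>)"
  proof (rule integral_norm_bound_integral[where f = "\<lambda>\<zeta>. \<rho> \<zeta> / sqrt ((\<zeta> - z)\<^sup>2 + r\<^sup>2) - \<rho> z * (1 / sqrt ((\<zeta> - z)\<^sup>2 + r\<^sup>2))", simplified real_norm_def])
    show "(\<lambda>\<zeta>. \<rho> \<zeta> / sqrt ((\<zeta> - z)\<^sup>2 + r\<^sup>2) - \<rho> z * (1 / sqrt ((\<zeta> - z)\<^sup>2 + r\<^sup>2))) integrable_on {0..2*z}"
      by (intro integrable_diff i1 integrable_on_mult_right i2)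
    show "(\<lambda>\<zeta>. \<Omega> \<bar>\<zeta> - z\<bar>) integrable_on {0..2*z}" using pI by blast
    fix \<zeta> assume zeta: "\<zeta> \<in> {0..2*z}"
    have eqd: "\<rho> \<zeta> / sqrt ((\<zeta> - z)\<^sup>2 + r\<^sup>2) - \<rho> z * (1 / sqrt ((\<zeta> - z)\<^sup>2 + r\<^sup>2))
        = (\<rho> \<zeta> - \<rho> z) / sqrt ((\<zeta> - z)\<^sup>2 + r\<^sup>2)" by (simp add: diff_divide_distrib)
    show "\<bar>\<rho> \<zeta> / sqrt ((\<zeta> - z)\<^sup>2 + r\<^sup>2) - \<rho> z * (1 / sqrt ((\<zeta> - z)\<^sup>2 + r\<^sup>2))\<bar> \<le> \<Omega> \<bar>\<zeta> - z\<bar>"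
    proof (cases "\<zeta> = z")
      case True
      then show ?thesis unfolding eqd \<Omega>_def by simp
    next
      case False
      have le1: "\<bar>\<rho> \<zeta> - \<rho> z\<bar> \<le> w \<bar>\<zeta> - z\<bar>" using wle zeta z by auto
      have "sqrt ((\<zeta> - z)\<^sup>2) \<le> sqrt ((\<zeta> - z)\<^sup>2 + r\<^sup>2)" by (rule real_sqrt_le_mono) simp
      then have le2: "\<bar>\<zeta> - z\<bar> \<le> sqrt ((\<zeta> - z)\<^sup>2 + r\<^sup>2)" by simp
      have "\<bar>(\<rho> \<zeta> - \<rho> z) / sqrt ((\<zeta> - z)\<^sup>2 + r\<^sup>2)\<bar> = \<bar>\<rho> \<zeta> - \<rho> z\<bar> / sqrt ((\<zeta> - z)\<^sup>2 + r\<^sup>2)"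
        using sp[of \<zeta>] by simp
      also have "\<dots> \<le> w \<bar>\<zeta> - z\<bar> / \<bar>\<zeta> - z\<bar>"
        by (rule frac_le) (use le1 le2 False wnn in auto)
      finally show ?thesis unfolding eqd \<Omega>_def .
    qed
  qed
  also have "integral {0..2*z} (\<lambda>\<zeta>. \<Omega> \<bar>\<zeta> - z\<bar>) = 2 * integral {0..z} (\<lambda>t. w t / t)"
    using pI unfolding I_def \<Omega>_def by (simp add: integral_unique)
  finally show ?thesis .
qed

lemma mc_facts:
  fixes \<rho> :: "real \<Rightarrow> real" and b :: real
  assumes cont: "continuous_on {0..b} \<rho>" and b: "0 \<le> b"
  shows "\<forall>x\<in>{0..b}. \<forall>y\<in>{0..b}. \<bar>\<rho> x - \<rho> y\<bar> \<le> modulus_cont \<rho> 0 b \<bar>x - y\<bar>"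
    and "\<forall>t\<ge>0. modulus_cont \<rho> 0 b t \<ge> 0"
    and "\<forall>s t. 0 \<le> s \<and> s \<le> t \<longrightarrow> modulus_cont \<rho> 0 b s \<le> modulus_cont \<rho> 0 b t"
proof -
  define S where "S t = {\<bar>\<rho> x - \<rho> y\<bar> | x y. x \<in> {0..b} \<and> y \<in> {0..b} \<and> \<bar>x - y\<bar> \<le> t}" for t
  have mc: "modulus_cont \<rho> 0 b t = Sup (S t)" for t unfolding modulus_cont_def S_def ..
  have "bounded (\<rho> ` {0..b})" by (rule compact_imp_bounded[OF compact_continuous_image[OF cont compact_Icc]])
  then obtain B where B: "\<forall>x\<in>{0..b}. \<bar>\<rho> x\<bar> \<le> B" unfolding bounded_iff by auto
  have bdd: "bdd_above (S t)" for t
  proof (rule bdd_aboveI[of _ "2 * B"])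
    fix u assume "u \<in> S t"
    then obtain x y where "u = \<bar>\<rho> x - \<rho> y\<bar>" "x \<in> {0..b}" "y \<in> {0..b}" unfolding S_def by blast
    moreover have "\<bar>\<rho> x\<bar> \<le> B" "\<bar>\<rho> y\<bar> \<le> B" using B calculation by auto
    moreover have "\<bar>\<rho> x - \<rho> y\<bar> \<le> \<bar>\<rho> x\<bar> + \<bar>\<rho> y\<bar>" by (rule abs_triangle_ineq4)
    ultimately show "u \<le> 2 * B" by linarith
  qed
  have mem: "\<bar>\<rho> x - \<rho> y\<bar> \<in> S t" if "x \<in> {0..b}" "y \<in> {0..b}" "\<bar>x - y\<bar> \<le> t" for x y t
    unfolding S_def using that by blast
  show A: "\<forall>x\<in>{0..b}. \<forall>y\<in>{0..b}. \<bar>\<rho> x - \<rho> y\<bar> \<le> modulus_cont \<rho> 0 b \<bar>x - y\<bar>"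
    unfolding mc using mem bdd by (auto intro!: cSup_upper)
  show "\<forall>t\<ge>0. modulus_cont \<rho> 0 b t \<ge> 0"
  proof (intro allI impI)
    fix t :: real assume "t \<ge> 0"
    then have "\<bar>\<rho> 0 - \<rho> 0\<bar> \<in> S t" using b by (intro mem) auto
    then have "\<bar>\<rho> 0 - \<rho> 0\<bar> \<le> Sup (S t)" using bdd by (intro cSup_upper)
    then show "modulus_cont \<rho> 0 b t \<ge> 0" unfolding mc by simp
  qed
  show "\<forall>s t. 0 \<le> s \<and> s \<le> t \<longrightarrow> modulus_cont \<rho> 0 b s \<le> modulus_cont \<rho> 0 b t"
  proof (intro allI impI)
    fix s t :: real assume st: "0 \<le> s \<and> s \<le> t"
    have "S s \<noteq> {}" using mem[of 0 0 s] st b by auto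
    moreover have "S s \<subseteq> S t" unfolding S_def using st by force
    ultimately show "modulus_cont \<rho> 0 b s \<le> modulus_cont \<rho> 0 b t" unfolding mc
      using bdd by (intro cSup_subset_mono)
  qed
qed



lemma ev_small: "e > 0 \<Longrightarrow> eventually (\<lambda>z. 0 < z \<and> z < e) (at_right (0::real))"
  unfolding eventually_at_right_field by (rule exI[of _ e]) simp

lemma comp_lin: "\<kappa> > 0 \<Longrightarrow> filterlim (\<lambda>z. \<kappa> * z) (at_right 0) (at_right (0::real))"
proof (rule tendsto_imp_filterlim_at_right)
  assume k: "\<kappa> > 0"
  have "((\<lambda>z. \<kappa> * z) \<longlongrightarrow> \<kappa> * 0) (at_right (0::real))" by (intro tendsto_intros)
  then show "((\<lambda>z. \<kappa> * z) \<longlongrightarrow> 0) (at_right (0::real))" by simp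
  show "eventually (\<lambda>z. 0 < \<kappa> * z) (at_right (0::real))"
    using eventually_at_right_less[of "0::real"] by eventually_elim (use k in simp)
qed

lemma rho_at0:
  fixes \<rho> :: "real \<Rightarrow> real"
  assumes L: "L > 0" and cont: "continuous_on {0..L} \<rho>" and rho0: "\<rho> 0 = 0"
  shows "(\<rho> \<longlongrightarrow> 0) (at_right 0)"
proof -
  have "(\<rho> \<longlongrightarrow> \<rho> 0) (at 0 within {0..L})" using cont L by (simp add: continuous_on_def)
  then show ?thesis using L rho0 by (simp add: at_within_Icc_at_right)
qed

lemma rho_scaled:
  fixes \<rho> :: "real \<Rightarrow> real"
  assumes L: "L > 0" and cont: "continuous_on {0..L} \<rho>" and rho0: "\<rho> 0 = 0"
    and k: "\<kappa> > 0" and rl: "((\<lambda>z. \<rho> z * ln z) \<longlongrightarrow> 0) (at_right 0)"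
  shows "((\<lambda>z. \<rho> (\<kappa> * z)) \<longlongrightarrow> 0) (at_right 0)"
    and "((\<lambda>z. \<rho> (\<kappa> * z) * ln z) \<longlongrightarrow> 0) (at_right 0)"
proof -
  note f = comp_lin[OF k]
  show g: "((\<lambda>z. \<rho> (\<kappa> * z)) \<longlongrightarrow> 0) (at_right 0)"
    by (rule filterlim_compose[OF rho_at0[OF L cont rho0] f])
  have a: "((\<lambda>z. \<rho> (\<kappa> * z) * ln (\<kappa> * z)) \<longlongrightarrow> 0) (at_right 0)"
    by (rule filterlim_compose[OF rl f])
  have "((\<lambda>z. \<rho> (\<kappa> * z) * ln (\<kappa> * z) - \<rho> (\<kappa> * z) * ln \<kappa>) \<longlongrightarrow> 0 - 0 * ln \<kappa>) (at_right 0)"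
    by (intro tendsto_intros a g)
  then have "((\<lambda>z. \<rho> (\<kappa> * z) * ln (\<kappa> * z) - \<rho> (\<kappa> * z) * ln \<kappa>) \<longlongrightarrow> 0) (at_right 0)" by simp
  then show "((\<lambda>z. \<rho> (\<kappa> * z) * ln z) \<longlongrightarrow> 0) (at_right 0)"
  proof (rule Lim_transform_eventually)
    show "eventually (\<lambda>z. \<rho> (\<kappa> * z) * ln (\<kappa> * z) - \<rho> (\<kappa> * z) * ln \<kappa> = \<rho> (\<kappa> * z) * ln z) (at_right 0)"
      using eventually_at_right_less[of "0::real"]
      by eventually_elim (use k in \<open>simp add: ln_mult algebra_simps\<close>)
  qed
qed

lemma rlim:
  fixes g :: "real \<Rightarrow> real"
  assumes g: "(g \<longlongrightarrow> 0) (at_right 0)" and gp: "eventually (\<lambda>z. g z > 0) (at_right 0)" and a: "\<alpha> > 0"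
  shows "((\<lambda>z. exp (- \<alpha> / g z)) \<longlongrightarrow> 0) (at_right 0)"
proof (rule Lim_null_comparison)
  show "eventually (\<lambda>z. norm (exp (- \<alpha> / g z)) \<le> g z / \<alpha>) (at_right 0)"
    using gp
  proof eventually_elim
    case (elim z)
    define x where "x = \<alpha> / g z"
    have x: "x > 0" unfolding x_def using a elim by simp
    have "x < exp x" using exp_gt_zero[of x] exp_ge_add_one_self[of x] by linarith
    then have "1 / exp x \<le> 1 / x" using x by (intro divide_left_mono) auto
    moreover have "exp (- \<alpha> / g z) = 1 / exp x" unfolding x_def by (simp add: exp_minus field_simps)
    moreover have "1 / x = g z / \<alpha>" unfolding x_def using a elim by simp
    ultimately show ?case by simp
  qed
  have "((\<lambda>z. g z / \<alpha>) \<longlongrightarrow> 0 / \<alpha>) (at_right 0)" using a by (intro tendsto_intros g) simp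
  then show "((\<lambda>z. g z / \<alpha>) \<longlongrightarrow> 0) (at_right 0)" by simp
qed

lemma ev_pos:
  fixes \<rho> :: "real \<Rightarrow> real"
  assumes L: "L > 0" and pos: "\<forall>x\<in>{0<..L}. \<rho> x > 0" and k: "\<kappa> > 0"
  shows "eventually (\<lambda>z. \<rho> (\<kappa> * z) > 0) (at_right 0)"
proof -
  have "L / \<kappa> > 0" using L k by simp
  from ev_small[OF this] show ?thesis
  proof eventually_elim
    case (elim z)
    then have "\<kappa> * z \<in> {0<..L}" using k by (auto simp: field_simps)
    then show ?case using pos by blast
  qed
qed

lemma split_pot:
  fixes \<rho> :: "real \<Rightarrow> real"
  assumes cont: "continuous_on {0..L} \<rho>" and r: "r > 0" and m: "0 \<le> m" "m \<le> L"
  shows "pot \<rho> L r z = integral {0..m} (\<lambda>\<zeta>. \<rho> \<zeta> / sqrt ((\<zeta> - z)\<^sup>2 + r\<^sup>2))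
                      + integral {m..L} (\<lambda>\<zeta>. \<rho> \<zeta> / sqrt ((\<zeta> - z)\<^sup>2 + r\<^sup>2))"
proof -
  have sp: "sqrt ((\<zeta> - z)\<^sup>2 + r\<^sup>2) > 0" for \<zeta>
    using r by (simp add: add_nonneg_pos)
  have i: "(\<lambda>\<zeta>. \<rho> \<zeta> / sqrt ((\<zeta> - z)\<^sup>2 + r\<^sup>2)) integrable_on {0..L}"
  proof (rule integrable_continuous_real, rule continuous_on_divide)
    show "continuous_on {0..L} (\<lambda>\<zeta>. sqrt ((\<zeta> - z)\<^sup>2 + r\<^sup>2))" by (intro continuous_intros)
    show "\<forall>\<zeta>\<in>{0..L}. sqrt ((\<zeta> - z)\<^sup>2 + r\<^sup>2) \<noteq> 0" using sp by (metis less_irrefl)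
  qed (rule cont)
  show ?thesis unfolding pot_def
    using Henstock_Kurzweil_Integration.integral_combine[OF m i] by simp
qed

lemma cont_int:
  fixes \<rho> :: "real \<Rightarrow> real"
  assumes cont: "continuous_on {0..L} \<rho>" and r: "r > 0" and m: "0 \<le> m" "m \<le> n" "n \<le> L"
  shows "(\<lambda>\<zeta>. \<rho> \<zeta> / sqrt ((\<zeta> - z)\<^sup>2 + r\<^sup>2)) integrable_on {m..n}"
proof -
  have sp: "sqrt ((\<zeta> - z)\<^sup>2 + r\<^sup>2) > 0" for \<zeta>
    using r by (simp add: add_nonneg_pos)
  show ?thesis
  proof (rule integrable_continuous_real, rule continuous_on_divide)
    show "continuous_on {m..n} \<rho>" by (rule continuous_on_subset[OF cont]) (use m in auto)
    show "continuous_on {m..n} (\<lambda>\<zeta>. sqrt ((\<zeta> - z)\<^sup>2 + r\<^sup>2))" by (intro continuous_intros)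
    show "\<forall>\<zeta>\<in>{m..n}. sqrt ((\<zeta> - z)\<^sup>2 + r\<^sup>2) \<noteq> 0" using sp by (metis less_irrefl)
  qed
qed



lemma alg2: "(p::real) > 0 \<Longrightarrow> p * (X + Y - 2 * ln (exp (- \<alpha> / p))) = 2 * \<alpha> + p * X + p * Y"
  by (simp add: field_simps)

lemma alg3: "(p::real) > 0 \<Longrightarrow> p * (X + X - 2 * ln (exp (- \<alpha> / p))) = 2 * \<alpha> + 2 * (p * X)"
  by (simp add: field_simps)

lemma ereal_Limsup_le:
  assumes "eventually (\<lambda>z. f z \<le> u z) (at_right (0::real))" "(u \<longlongrightarrow> l) (at_right 0)"
  shows "Limsup (at_right 0) (\<lambda>z. ereal (f z)) \<le> ereal l"
proof -
  have "Limsup (at_right 0) (\<lambda>z. ereal (f z)) \<le> Limsup (at_right 0) (\<lambda>z. ereal (u z))"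
    by (rule Limsup_mono) (use assms(1) in \<open>eventually_elim, simp\<close>)
  also have "\<dots> = ereal l"
    by (rule lim_imp_Limsup) (use assms(2) in \<open>auto simp: lim_ereal\<close>)
  finally show ?thesis .
qed

lemma ereal_Liminf_ge:
  assumes "eventually (\<lambda>z. u z \<le> f z) (at_right (0::real))" "(u \<longlongrightarrow> l) (at_right 0)"
  shows "ereal l \<le> Liminf (at_right 0) (\<lambda>z. ereal (f z))"
proof -
  have "ereal l = Liminf (at_right 0) (\<lambda>z. ereal (u z))"
    by (rule lim_imp_Liminf[symmetric]) (use assms(2) in \<open>auto simp: lim_ereal\<close>)
  also have "\<dots> \<le> Liminf (at_right 0) (\<lambda>z. ereal (f z))"
    by (rule Liminf_mono) (use assms(1) in \<open>eventually_elim, simp\<close>)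
  finally show ?thesis .
qed



theorem proposition4p5:
  fixes \<rho> :: "real \<Rightarrow> real" and L \<alpha> :: real
  assumes L_pos: "L > 0"
    and cont: "continuous_on {0..L} \<rho>"
    and nonneg: "\<forall>x\<in>{0..L}. \<rho> x \<ge> 0"
    and rho0: "\<rho> 0 = 0"
    and pos: "\<forall>x\<in>{0<..L}. \<rho> x > 0"
    and V00_fin: "(\<lambda>\<zeta>. \<rho> \<zeta> / \<zeta>) integrable_on {0..L}"
    and alpha_pos: "\<alpha> > 0"
  shows
    "(\<forall>b \<delta>. 0 < b \<and> b \<le> L \<and> mono_on {0..b} \<rho> \<and> 0 < \<delta> \<and> \<delta> < 1 \<longrightarrow>
        ((\<lambda>z. \<rho> z * ln z) \<longlongrightarrow> 0) (at_right 0) \<and>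
        Limsup (at_right 0) (\<lambda>z. ereal (pot \<rho> L (exp (- \<alpha> / \<rho> ((1 + \<delta>) * z))) z))
          \<le> ereal (pot \<rho> L 0 0 + 2 * \<alpha>) \<and>
        ereal (pot \<rho> L 0 0 + 2 * \<alpha>)
          \<le> Liminf (at_right 0) (\<lambda>z. ereal (pot \<rho> L (exp (- \<alpha> / \<rho> ((1 - \<delta>) * z))) z)))
     \<and>
     (\<forall>b. 0 < b \<and> b \<le> L \<and> dini_continuous_on \<rho> 0 b \<longrightarrow>
        ((\<lambda>z. \<rho> z * ln z) \<longlongrightarrow> 0) (at_right 0) \<and>
        ((\<lambda>z. pot \<rho> L (exp (- \<alpha> / \<rho> z)) z) \<longlongrightarrow> pot \<rho> L 0 0 + 2 * \<alpha>) (at_right 0))"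
proof -
  define V0 where "V0 = integral {0..L} (\<lambda>\<zeta>. \<rho> \<zeta> / \<zeta>)"
  have potV0: "pot \<rho> L 0 0 = V0"
    unfolding pot_def V0_def by (rule integral_cong) simp
  have partA: "\<forall>b \<delta>. 0 < b \<and> b \<le> L \<and> mono_on {0..b} \<rho> \<and> 0 < \<delta> \<and> \<delta> < 1 \<longrightarrow>
        ((\<lambda>z. \<rho> z * ln z) \<longlongrightarrow> 0) (at_right 0) \<and>
        Limsup (at_right 0) (\<lambda>z. ereal (pot \<rho> L (exp (- \<alpha> / \<rho> ((1 + \<delta>) * z))) z))
          \<le> ereal (pot \<rho> L 0 0 + 2 * \<alpha>) \<and>
        ereal (pot \<rho> L 0 0 + 2 * \<alpha>)
          \<le> Liminf (at_right 0) (\<lambda>z. ereal (pot \<rho> L (exp (- \<alpha> / \<rho> ((1 - \<delta>) * z))) z))"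
  proof (intro allI impI)
    fix b \<delta> :: real
    assume H: "0 < b \<and> b \<le> L \<and> mono_on {0..b} \<rho> \<and> 0 < \<delta> \<and> \<delta> < 1"
    then have b: "0 < b" "b \<le> L" and mo: "mono_on {0..b} \<rho>" and d: "0 < \<delta>" "\<delta> < 1" by auto
    have monoD: "\<rho> x \<le> \<rho> y" if "x \<in> {0..b}" "y \<in> {0..b}" "x \<le> y" for x y
      using mono_onD[OF mo that] .
    have rl: "((\<lambda>z. \<rho> z * ln z) \<longlongrightarrow> 0) (at_right 0)"
    proof (rule rho_log[of b \<rho> \<rho>])
      show "0 < b" by fact
      show "\<forall>t\<in>{0<..b}. 0 \<le> \<rho> t \<and> \<rho> t \<le> \<rho> t" using nonneg b by auto
      show "\<forall>s\<in>{0<..b}. \<forall>t\<in>{0<..b}. s \<le> t \<longrightarrow> \<rho> s \<le> \<rho> t" using monoD by auto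
      show "(\<lambda>t. \<rho> t / t) integrable_on {0..b}"
        by (rule integrable_on_subinterval[OF V00_fin]) (use b in auto)
    qed
    have Knn: "0 \<le> \<rho> \<zeta> / sqrt ((\<zeta> - z)\<^sup>2 + r\<^sup>2)" if "\<zeta> \<in> {0..L}" for \<zeta> z r
      using nonneg that by simp
    define r1 where "r1 z = exp (- \<alpha> / \<rho> ((1 + \<delta>) * z))" for z
    have k1: "(1 + \<delta>) > 0" using d by simp
    note g1 = rho_scaled(1)[OF L_pos cont rho0 k1 rl]
    note gl1 = rho_scaled(2)[OF L_pos cont rho0 k1 rl]
    note gp1 = ev_pos[OF L_pos pos k1]
    have r1lim: "(r1 \<longlongrightarrow> 0) (at_right 0)" unfolding r1_def by (rule rlim[OF g1 gp1 alpha_pos])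
    have B1: "((\<lambda>z. integral {(1 + \<delta>)*z..L} (\<lambda>\<zeta>. \<rho> \<zeta> / sqrt ((\<zeta> - z)\<^sup>2 + (r1 z)\<^sup>2))) \<longlongrightarrow> V0) (at_right 0)"
      unfolding V0_def by (rule lemB[OF L_pos cont nonneg V00_fin _ r1lim]) (use d in simp)
    have ln1: "((\<lambda>z. \<rho> ((1 + \<delta>) * z) * ln (\<delta> * z + sqrt ((\<delta> * z)\<^sup>2 + (r1 z)\<^sup>2))) \<longlongrightarrow> 0) (at_right 0)"
      by (rule lnlim[OF d(1) g1 gl1 r1lim])
    have ln1': "((\<lambda>z. \<rho> ((1 + \<delta>) * z) * ln (z + sqrt (z\<^sup>2 + (r1 z)\<^sup>2))) \<longlongrightarrow> 0) (at_right 0)"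
      using lnlim[of 1, OF _ g1 gl1 r1lim] by simp
    define u where "u z = integral {(1 + \<delta>)*z..L} (\<lambda>\<zeta>. \<rho> \<zeta> / sqrt ((\<zeta> - z)\<^sup>2 + (r1 z)\<^sup>2))
       + (2 * \<alpha> + \<rho> ((1 + \<delta>) * z) * ln (\<delta> * z + sqrt ((\<delta> * z)\<^sup>2 + (r1 z)\<^sup>2))
                + \<rho> ((1 + \<delta>) * z) * ln (z + sqrt (z\<^sup>2 + (r1 z)\<^sup>2)))" for z
    have ulim: "(u \<longlongrightarrow> V0 + 2 * \<alpha>) (at_right 0)"
      unfolding u_def using tendsto_add[OF B1 tendsto_add[OF tendsto_add[OF tendsto_const ln1] ln1']]
      by simp
    have bd1: "b / (1 + \<delta>) > 0" using b d by simp
    have ev1: "eventually (\<lambda>z. pot \<rho> L (r1 z) z \<le> u z) (at_right 0)"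
      using ev_small[OF bd1] gp1
    proof eventually_elim
      case (elim z)
      define r where "r = r1 z"
      define w where "w = (1 + \<delta>) * z"
      have z: "0 < z" and wb: "w < b" and pw: "\<rho> w > 0"
        using elim d unfolding w_def by (auto simp: field_simps)
      have w0: "0 \<le> w" unfolding w_def using z d by simp
      have r: "r > 0" unfolding r_def r1_def by simp
      have "pot \<rho> L r z = integral {0..w} (\<lambda>\<zeta>. \<rho> \<zeta> / sqrt ((\<zeta> - z)\<^sup>2 + r\<^sup>2))
                      + integral {w..L} (\<lambda>\<zeta>. \<rho> \<zeta> / sqrt ((\<zeta> - z)\<^sup>2 + r\<^sup>2))"
        by (rule split_pot[OF cont r w0]) (use wb b in simp)
      have KI: "((\<lambda>\<zeta>. 1 / sqrt ((\<zeta> - z)\<^sup>2 + r\<^sup>2)) has_integral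
          (ln (\<delta> * z + sqrt ((\<delta> * z)\<^sup>2 + r\<^sup>2)) + ln (z + sqrt (z\<^sup>2 + r\<^sup>2)) - 2 * ln r)) {0..w}"
      proof -
        have "((\<lambda>\<zeta>. 1 / sqrt ((\<zeta> - z)\<^sup>2 + r\<^sup>2)) has_integral
          (ln (\<delta> * z + sqrt ((\<delta> * z)\<^sup>2 + r\<^sup>2)) + ln (z + sqrt (z\<^sup>2 + r\<^sup>2)) - 2 * ln r)) {z - z..z + \<delta> * z}"
          by (rule K_integral) (use r z d in auto)
        moreover have "{z - z..z + \<delta> * z} = {0..w}" unfolding w_def by (simp add: algebra_simps)
        ultimately show ?thesis by (simp only:)
      qed
      have "integral {0..w} (\<lambda>\<zeta>. \<rho> \<zeta> / sqrt ((\<zeta> - z)\<^sup>2 + r\<^sup>2))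
          \<le> integral {0..w} (\<lambda>\<zeta>. \<rho> w * (1 / sqrt ((\<zeta> - z)\<^sup>2 + r\<^sup>2)))"
      proof (rule integral_le)
        show "(\<lambda>\<zeta>. \<rho> \<zeta> / sqrt ((\<zeta> - z)\<^sup>2 + r\<^sup>2)) integrable_on {0..w}"
          by (rule cont_int[OF cont r]) (use w0 wb b in auto)
        show "(\<lambda>\<zeta>. \<rho> w * (1 / sqrt ((\<zeta> - z)\<^sup>2 + r\<^sup>2))) integrable_on {0..w}"
          by (rule integrable_on_mult_right) (use KI in blast)
        fix \<zeta> assume "\<zeta> \<in> {0..w}"
        then have "\<rho> \<zeta> \<le> \<rho> w" using monoD w0 wb by auto
        then show "\<rho> \<zeta> / sqrt ((\<zeta> - z)\<^sup>2 + r\<^sup>2) \<le> \<rho> w * (1 / sqrt ((\<zeta> - z)\<^sup>2 + r\<^sup>2))"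
          by (simp add: divide_right_mono)
      qed
      also have "\<dots> = \<rho> w * (ln (\<delta> * z + sqrt ((\<delta> * z)\<^sup>2 + r\<^sup>2)) + ln (z + sqrt (z\<^sup>2 + r\<^sup>2)) - 2 * ln r)"
        by (rule integral_unique[OF has_integral_mult_right[OF KI]])
      also have "\<dots> = 2 * \<alpha> + \<rho> w * ln (\<delta> * z + sqrt ((\<delta> * z)\<^sup>2 + r\<^sup>2)) + \<rho> w * ln (z + sqrt (z\<^sup>2 + r\<^sup>2))"
        unfolding r_def r1_def w_def[symmetric] by (rule alg2[OF pw])
      finally show ?case unfolding u_def r_def[symmetric] w_def[symmetric]
        using \<open>pot \<rho> L r z = _\<close> by simp
    qed
    have LS: "Limsup (at_right 0) (\<lambda>z. ereal (pot \<rho> L (exp (- \<alpha> / \<rho> ((1 + \<delta>) * z))) z))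
          \<le> ereal (pot \<rho> L 0 0 + 2 * \<alpha>)"
      using ereal_Limsup_le[OF ev1 ulim] unfolding potV0 r1_def .
    define r2 where "r2 z = exp (- \<alpha> / \<rho> ((1 - \<delta>) * z))" for z
    have k2: "(1 - \<delta>) > 0" using d by simp
    note g2 = rho_scaled(1)[OF L_pos cont rho0 k2 rl]
    note gl2 = rho_scaled(2)[OF L_pos cont rho0 k2 rl]
    note gp2 = ev_pos[OF L_pos pos k2]
    have r2lim: "(r2 \<longlongrightarrow> 0) (at_right 0)" unfolding r2_def by (rule rlim[OF g2 gp2 alpha_pos])
    have B2: "((\<lambda>z. integral {(1 + \<delta>)*z..L} (\<lambda>\<zeta>. \<rho> \<zeta> / sqrt ((\<zeta> - z)\<^sup>2 + (r2 z)\<^sup>2))) \<longlongrightarrow> V0) (at_right 0)"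
      unfolding V0_def by (rule lemB[OF L_pos cont nonneg V00_fin _ r2lim]) (use d in simp)
    have ln2: "((\<lambda>z. \<rho> ((1 - \<delta>) * z) * ln (\<delta> * z + sqrt ((\<delta> * z)\<^sup>2 + (r2 z)\<^sup>2))) \<longlongrightarrow> 0) (at_right 0)"
      by (rule lnlim[OF d(1) g2 gl2 r2lim])
    define l where "l z = integral {(1 + \<delta>)*z..L} (\<lambda>\<zeta>. \<rho> \<zeta> / sqrt ((\<zeta> - z)\<^sup>2 + (r2 z)\<^sup>2))
       + (2 * \<alpha> + 2 * (\<rho> ((1 - \<delta>) * z) * ln (\<delta> * z + sqrt ((\<delta> * z)\<^sup>2 + (r2 z)\<^sup>2))))" for z
    have llim: "(l \<longlongrightarrow> V0 + 2 * \<alpha>) (at_right 0)"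
      unfolding l_def using tendsto_add[OF B2 tendsto_add[OF tendsto_const tendsto_mult[OF tendsto_const ln2]]]
      by simp
    have ev2: "eventually (\<lambda>z. l z \<le> pot \<rho> L (r2 z) z) (at_right 0)"
      using ev_small[OF bd1] gp2
    proof eventually_elim
      case (elim z)
      define r where "r = r2 z"
      define w where "w = (1 - \<delta>) * z"
      define v where "v = (1 + \<delta>) * z"
      have z: "0 < z" and vb: "v < b" and pw: "\<rho> w > 0"
        using elim d unfolding w_def v_def by (auto simp: field_simps)
      have w0: "0 \<le> w" and wv: "w \<le> v" unfolding w_def v_def using z d by auto
      have r: "r > 0" unfolding r_def r2_def by simp
      have sp: "pot \<rho> L r z = integral {0..v} (\<lambda>\<zeta>. \<rho> \<zeta> / sqrt ((\<zeta> - z)\<^sup>2 + r\<^sup>2))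
                      + integral {v..L} (\<lambda>\<zeta>. \<rho> \<zeta> / sqrt ((\<zeta> - z)\<^sup>2 + r\<^sup>2))"
        by (rule split_pot[OF cont r]) (use w0 wv vb b in auto)
      have iv: "(\<lambda>\<zeta>. \<rho> \<zeta> / sqrt ((\<zeta> - z)\<^sup>2 + r\<^sup>2)) integrable_on {0..v}"
        by (rule cont_int[OF cont r]) (use w0 wv vb b in auto)
      have sp2: "integral {0..v} (\<lambda>\<zeta>. \<rho> \<zeta> / sqrt ((\<zeta> - z)\<^sup>2 + r\<^sup>2))
          = integral {0..w} (\<lambda>\<zeta>. \<rho> \<zeta> / sqrt ((\<zeta> - z)\<^sup>2 + r\<^sup>2)) + integral {w..v} (\<lambda>\<zeta>. \<rho> \<zeta> / sqrt ((\<zeta> - z)\<^sup>2 + r\<^sup>2))"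
        using Henstock_Kurzweil_Integration.integral_combine[OF w0 wv iv] by simp
      have nn: "integral {0..w} (\<lambda>\<zeta>. \<rho> \<zeta> / sqrt ((\<zeta> - z)\<^sup>2 + r\<^sup>2)) \<ge> 0"
      proof (rule integral_nonneg)
        show "(\<lambda>\<zeta>. \<rho> \<zeta> / sqrt ((\<zeta> - z)\<^sup>2 + r\<^sup>2)) integrable_on {0..w}"
          by (rule cont_int[OF cont r]) (use w0 wv vb b in auto)
        fix \<zeta> assume "\<zeta> \<in> {0..w}"
        then show "0 \<le> \<rho> \<zeta> / sqrt ((\<zeta> - z)\<^sup>2 + r\<^sup>2)" using wv vb b by (intro Knn) auto
      qed
      have KI: "((\<lambda>\<zeta>. 1 / sqrt ((\<zeta> - z)\<^sup>2 + r\<^sup>2)) has_integral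
          (ln (\<delta> * z + sqrt ((\<delta> * z)\<^sup>2 + r\<^sup>2)) + ln (\<delta> * z + sqrt ((\<delta> * z)\<^sup>2 + r\<^sup>2)) - 2 * ln r)) {w..v}"
      proof -
        have "((\<lambda>\<zeta>. 1 / sqrt ((\<zeta> - z)\<^sup>2 + r\<^sup>2)) has_integral
          (ln (\<delta> * z + sqrt ((\<delta> * z)\<^sup>2 + r\<^sup>2)) + ln (\<delta> * z + sqrt ((\<delta> * z)\<^sup>2 + r\<^sup>2)) - 2 * ln r)) {z - \<delta> * z..z + \<delta> * z}"
          by (rule K_integral) (use r z d in auto)
        moreover have "{z - \<delta> * z..z + \<delta> * z} = {w..v}" unfolding w_def v_def by (simp add: algebra_simps)
        ultimately show ?thesis by (simp only:)
      qed
      have "2 * \<alpha> + 2 * (\<rho> w * ln (\<delta> * z + sqrt ((\<delta> * z)\<^sup>2 + r\<^sup>2)))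
          = \<rho> w * (ln (\<delta> * z + sqrt ((\<delta> * z)\<^sup>2 + r\<^sup>2)) + ln (\<delta> * z + sqrt ((\<delta> * z)\<^sup>2 + r\<^sup>2)) - 2 * ln r)"
        unfolding r_def r2_def w_def[symmetric] by (rule alg3[OF pw, symmetric])
      also have "\<dots> = integral {w..v} (\<lambda>\<zeta>. \<rho> w * (1 / sqrt ((\<zeta> - z)\<^sup>2 + r\<^sup>2)))"
        by (rule integral_unique[symmetric, OF has_integral_mult_right[OF KI]])
      also have "\<dots> \<le> integral {w..v} (\<lambda>\<zeta>. \<rho> \<zeta> / sqrt ((\<zeta> - z)\<^sup>2 + r\<^sup>2))"
      proof (rule integral_le)
        show "(\<lambda>\<zeta>. \<rho> \<zeta> / sqrt ((\<zeta> - z)\<^sup>2 + r\<^sup>2)) integrable_on {w..v}"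
          by (rule cont_int[OF cont r]) (use w0 wv vb b in auto)
        show "(\<lambda>\<zeta>. \<rho> w * (1 / sqrt ((\<zeta> - z)\<^sup>2 + r\<^sup>2))) integrable_on {w..v}"
          by (rule integrable_on_mult_right) (use KI in blast)
        fix \<zeta> assume "\<zeta> \<in> {w..v}"
        then have "\<rho> w \<le> \<rho> \<zeta>" using monoD w0 vb by auto
        then show "\<rho> w * (1 / sqrt ((\<zeta> - z)\<^sup>2 + r\<^sup>2)) \<le> \<rho> \<zeta> / sqrt ((\<zeta> - z)\<^sup>2 + r\<^sup>2)"
          by (simp add: divide_right_mono)
      qed
      finally show ?case unfolding l_def r_def[symmetric] w_def[symmetric] v_def[symmetric]
        using sp sp2 nn by simp
    qed
    have LI: "ereal (pot \<rho> L 0 0 + 2 * \<alpha>)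
          \<le> Liminf (at_right 0) (\<lambda>z. ereal (pot \<rho> L (exp (- \<alpha> / \<rho> ((1 - \<delta>) * z))) z))"
      using ereal_Liminf_ge[OF ev2 llim] unfolding potV0 r2_def .
    show "((\<lambda>z. \<rho> z * ln z) \<longlongrightarrow> 0) (at_right 0) \<and>
        Limsup (at_right 0) (\<lambda>z. ereal (pot \<rho> L (exp (- \<alpha> / \<rho> ((1 + \<delta>) * z))) z))
          \<le> ereal (pot \<rho> L 0 0 + 2 * \<alpha>) \<and>
        ereal (pot \<rho> L 0 0 + 2 * \<alpha>)
          \<le> Liminf (at_right 0) (\<lambda>z. ereal (pot \<rho> L (exp (- \<alpha> / \<rho> ((1 - \<delta>) * z))) z))"
      using rl LS LI by blast
  qed
  have partB: "\<forall>b. 0 < b \<and> b \<le> L \<and> dini_continuous_on \<rho> 0 b \<longrightarrow>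
        ((\<lambda>z. \<rho> z * ln z) \<longlongrightarrow> 0) (at_right 0) \<and>
        ((\<lambda>z. pot \<rho> L (exp (- \<alpha> / \<rho> z)) z) \<longlongrightarrow> pot \<rho> L 0 0 + 2 * \<alpha>) (at_right 0)"
  proof (intro allI impI)
    fix b :: real
    assume H: "0 < b \<and> b \<le> L \<and> dini_continuous_on \<rho> 0 b"
    then have b: "0 < b" "b \<le> L" and dn: "dini_continuous_on \<rho> 0 b" by auto
    have contb: "continuous_on {0..b} \<rho>" by (rule continuous_on_subset[OF cont]) (use b in auto)
    define \<omega> where "\<omega> = modulus_cont \<rho> 0 b"
    have wint1: "(\<lambda>t. \<omega> t / t) integrable_on {0..1}"
      using dn unfolding dini_continuous_on_def \<omega>_def by blast
    note mc = mc_facts[OF contb less_imp_le[OF b(1)], folded \<omega>_def]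
    define b' where "b' = min b 1"
    have b': "0 < b'" "b' \<le> b" "b' \<le> 1" unfolding b'_def using b by auto
    have rl: "((\<lambda>z. \<rho> z * ln z) \<longlongrightarrow> 0) (at_right 0)"
    proof (rule rho_log[of b' \<rho> \<omega>])
      show "0 < b'" by fact
      show "\<forall>t\<in>{0<..b'}. 0 \<le> \<rho> t \<and> \<rho> t \<le> \<omega> t"
      proof
        fix t assume t: "t \<in> {0<..b'}"
        then have "t \<in> {0..b}" "(0::real) \<in> {0..b}" using b' by auto
        then have "\<bar>\<rho> t - \<rho> 0\<bar> \<le> \<omega> \<bar>t - 0\<bar>" using mc(1) by blast
        moreover have "0 \<le> \<rho> t" using nonneg t b' b by auto
        ultimately show "0 \<le> \<rho> t \<and> \<rho> t \<le> \<omega> t" using t rho0 by auto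
      qed
      show "\<forall>s\<in>{0<..b'}. \<forall>t\<in>{0<..b'}. s \<le> t \<longrightarrow> \<omega> s \<le> \<omega> t" using mc(3) by auto
      show "(\<lambda>t. \<omega> t / t) integrable_on {0..b'}"
        by (rule integrable_on_subinterval[OF wint1]) (use b' in auto)
    qed
    define r where "r z = exp (- \<alpha> / \<rho> z)" for z
    have g: "(\<rho> \<longlongrightarrow> 0) (at_right 0)" by (rule rho_at0[OF L_pos cont rho0])
    have gp: "eventually (\<lambda>z. \<rho> z > 0) (at_right 0)" using ev_pos[OF L_pos pos, of 1] by simp
    have rlim: "(r \<longlongrightarrow> 0) (at_right 0)" unfolding r_def by (rule rlim[OF g gp alpha_pos])
    have B: "((\<lambda>z. integral {2*z..L} (\<lambda>\<zeta>. \<rho> \<zeta> / sqrt ((\<zeta> - z)\<^sup>2 + (r z)\<^sup>2))) \<longlongrightarrow> V0) (at_right 0)"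
      unfolding V0_def by (rule lemB[OF L_pos cont nonneg V00_fin _ rlim]) simp
    have ln: "((\<lambda>z. \<rho> z * ln (z + sqrt (z\<^sup>2 + (r z)\<^sup>2))) \<longlongrightarrow> 0) (at_right 0)"
      using lnlim[of 1 \<rho>, OF _ g rl rlim] by simp
    define M where "M z = integral {2*z..L} (\<lambda>\<zeta>. \<rho> \<zeta> / sqrt ((\<zeta> - z)\<^sup>2 + (r z)\<^sup>2))
        + (2 * \<alpha> + 2 * (\<rho> z * ln (z + sqrt (z\<^sup>2 + (r z)\<^sup>2))))" for z
    have Mlim: "(M \<longlongrightarrow> V0 + 2 * \<alpha>) (at_right 0)"
      unfolding M_def using tendsto_add[OF B tendsto_add[OF tendsto_const tendsto_mult[OF tendsto_const ln]]]
      by simp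
    define I where "I z = integral {0..z} (\<lambda>t. \<omega> t / t)" for z
    have "continuous_on {0..1} I" unfolding I_def by (rule indefinite_integral_continuous_1[OF wint1])
    then have "(I \<longlongrightarrow> I 0) (at 0 within {0..1})" by (simp add: continuous_on_def)
    then have I0: "(I \<longlongrightarrow> 0) (at_right 0)" by (simp add: at_within_Icc_at_right I_def)
    have b2: "b' / 2 > 0" using b' by simp
    have ev: "eventually (\<lambda>z. norm (pot \<rho> L (r z) z - M z) \<le> 2 * I z) (at_right 0)"
      using ev_small[OF b2] gp
    proof eventually_elim
      case (elim z)
      then have z: "0 < z" "2 * z \<le> b" "z \<le> 1" and pz: "\<rho> z > 0" using b' by auto
      define rr where "rr = r z"
      have rr: "rr > 0" unfolding rr_def r_def by simp
      have sp: "pot \<rho> L rr z = integral {0..2*z} (\<lambda>\<zeta>. \<rho> \<zeta> / sqrt ((\<zeta> - z)\<^sup>2 + rr\<^sup>2))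
                      + integral {2*z..L} (\<lambda>\<zeta>. \<rho> \<zeta> / sqrt ((\<zeta> - z)\<^sup>2 + rr\<^sup>2))"
        by (rule split_pot[OF cont rr]) (use z b in auto)
      have KI: "((\<lambda>\<zeta>. 1 / sqrt ((\<zeta> - z)\<^sup>2 + rr\<^sup>2)) has_integral
          (ln (z + sqrt (z\<^sup>2 + rr\<^sup>2)) + ln (z + sqrt (z\<^sup>2 + rr\<^sup>2)) - 2 * ln rr)) {0..2*z}"
      proof -
        have "((\<lambda>\<zeta>. 1 / sqrt ((\<zeta> - z)\<^sup>2 + rr\<^sup>2)) has_integral
          (ln (z + sqrt (z\<^sup>2 + rr\<^sup>2)) + ln (z + sqrt (z\<^sup>2 + rr\<^sup>2)) - 2 * ln rr)) {z - z..z + z}"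
          by (rule K_integral) (use rr z in auto)
        moreover have "{z - z..z + z} = {0..2*z}" by simp
        ultimately show ?thesis by (simp only:)
      qed
      have J: "\<rho> z * integral {0..2*z} (\<lambda>\<zeta>. 1 / sqrt ((\<zeta> - z)\<^sup>2 + rr\<^sup>2))
          = 2 * \<alpha> + 2 * (\<rho> z * ln (z + sqrt (z\<^sup>2 + rr\<^sup>2)))"
        unfolding integral_unique[OF KI] unfolding rr_def r_def by (rule alg3[OF pz])
      have wz: "(\<lambda>t. \<omega> t / t) integrable_on {0..z}"
        by (rule integrable_on_subinterval[OF wint1]) (use z in auto)
      have E: "\<bar>integral {0..2*z} (\<lambda>\<zeta>. \<rho> \<zeta> / sqrt ((\<zeta> - z)\<^sup>2 + rr\<^sup>2))
          - \<rho> z * integral {0..2*z} (\<lambda>\<zeta>. 1 / sqrt ((\<zeta> - z)\<^sup>2 + rr\<^sup>2))\<bar>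
         \<le> 2 * integral {0..z} (\<lambda>t. \<omega> t / t)"
        by (rule dini_err[OF contb mc(1) mc(2) wz z(1) z(2) rr])
      show ?case unfolding M_def I_def rr_def[symmetric] using sp J E by simp
    qed
    have "((\<lambda>z. pot \<rho> L (r z) z) \<longlongrightarrow> V0 + 2 * \<alpha>) (at_right 0)"
    proof (rule Lim_transform[OF Mlim])
      have "((\<lambda>z. 2 * I z) \<longlongrightarrow> 2 * 0) (at_right 0)" by (intro tendsto_intros I0)
      then show "((\<lambda>z. pot \<rho> L (r z) z - M z) \<longlongrightarrow> 0) (at_right 0)"
        by (intro Lim_null_comparison[OF ev]) simp
    qed
    then show "((\<lambda>z. \<rho> z * ln z) \<longlongrightarrow> 0) (at_right 0) \<and>
        ((\<lambda>z. pot \<rho> L (exp (- \<alpha> / \<rho> z)) z) \<longlongrightarrow> pot \<rho> L 0 0 + 2 * \<alpha>) (at_right 0)"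
      unfolding r_def potV0 using rl by blast
  qed
  show ?thesis using partA partB by blast
qed

end
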